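(* Let $u$ be a weak solution of the two-phase problem in $\Omega$. Then $u^-=\min\{u,0\}$ is a weak solution of the one-phase problem $\Delta w=0$ in $\{w<0\}$, $|\nabla w|^2=(x_2^0-x_2)^+$ on $\partial\{w<0\}$, in $\Omega\cap\{u\le0\}$.
   Context: Let $\Omega\subset\mathbb{R}^2$ be open and $x_2^0\in\mathbb{R}$ a constant; $\chi_A$ denotes the characteristic function of $A$. A weak solution of the two-phase problem is $u\in W^{1,2}(\Omega)$ with: (i) $u\in C(\Omega)\cap C^2(\Omega\cap\{u\ne0\})$; (ii) for every $\phi=(\phi_1,\phi_2)\in C^1_0(\Omega;\mathbb{R}^2)$, $0=\int_\Omega(|\nabla u|^2\mathrm{div}\phi-2\nabla u\,D\phi\,\nabla u)dx+\int_{\Omega\cap\{x_2<x_2^0\}}((x_2^0-x_2)\chi_{\{u<0\}}\mathrm{div}\phi-\chi_{\{u<0\}}\phi_2)dx+\int_{\Omega\cap\{x_2>x_2^0\}}((x_2-x_2^0)\chi_{\{u>0\}}\mathrm{div}\phi+\chi_{\{u>0\}}\phi_2)dx$; (iii) $\partial\{u<0\}\cap\Omega$ is locally a $C^{2,\alpha}$ curve. A weak solution of the one-phase problem in a domain $U$ is a non-positive $w\in W^{1,2}(U)$ with: (i) $w\in C(U)\cap C^2(U\cap\{w<0\})$; (ii) for every $\phi\in C^1_0(U;\mathbb{R}^2)$, $0=\int_U(|\nabla w|^2\mathrm{div}\phi-2\nabla w\,D\phi\,\nabla w)dx+\int_{U\cap\{x_2<x_2^0\}}((x_2^0-x_2)\chi_{\{w<0\}}\mathrm{div}\phi-\chi_{\{w<0\}}\phi_2)dx$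 (vanishing first domain variation of $\int(|\nabla v|^2+(x_2^0-x_2)^+\chi_{\{v<0\}})dx$); (iii) $\partial\{w<0\}\cap U$ is locally a $C^{2,\alpha}$ curve. *)

theory Defs
  imports "HOL-Analysis.Analysis"
begin

definition pd :: "(real^2 \<Rightarrow> 'b::real_normed_vector) \<Rightarrow> 2 \<Rightarrow> real^2 \<Rightarrow> 'b" where
  "pd f j x = frechet_derivative f (at x) (axis j 1)"

definition C1c :: "(real^2) set \<Rightarrow> (real^2 \<Rightarrow> 'b::real_normed_vector) \<Rightarrow> bool" where
  "C1c U f \<longleftrightarrow> (\<forall>x. f differentiable (at x)) \<and> (\<forall>j. continuous_on UNIV (pd f j)) \<and>
     compact (closure {x. f x \<noteq> 0}) \<and> closure {x. f x \<noteq> 0} \<subseteq> U"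

definition divg :: "(real^2 \<Rightarrow> real^2) \<Rightarrow> real^2 \<Rightarrow> real" where
  "divg \<phi> x = (\<Sum>i\<in>UNIV. pd \<phi> i x $ i)"

definition quadD :: "real^2 \<Rightarrow> (real^2 \<Rightarrow> real^2) \<Rightarrow> real^2 \<Rightarrow> real" where
  "quadD p \<phi> x = (\<Sum>i\<in>UNIV. \<Sum>j\<in>UNIV. p $ i * (pd \<phi> j x $ i) * p $ j)"

definition weak_gradient :: "(real^2) set \<Rightarrow> (real^2 \<Rightarrow> real) \<Rightarrow> (real^2 \<Rightarrow> real^2) \<Rightarrow> bool" where
  "weak_gradient U u g \<longleftrightarrow>
     set_borel_measurable lebesgue U u \<and> set_integrable lebesgue U (\<lambda>x. (u x)\<^sup>2) \<and>
     (\<forall>i. set_borel_measurable lebesgue U (\<lambda>x. g x $ i) \<and> set_integrable lebesgue U (\<lambda>x. (g x $ i)\<^sup>2)) \<and>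
     (\<forall>\<psi>::real^2 \<Rightarrow> real. C1c U \<psi> \<longrightarrow>
        (\<forall>i. (LINT x:U|lebesgue. u x * pd \<psi> i x) = - (LINT x:U|lebesgue. g x $ i * \<psi> x)))"

definition W12 :: "(real^2) set \<Rightarrow> (real^2 \<Rightarrow> real) \<Rightarrow> bool" where
  "W12 U u \<longleftrightarrow> (\<exists>g. weak_gradient U u g)"

definition C2_on :: "(real^2) set \<Rightarrow> (real^2 \<Rightarrow> real) \<Rightarrow> bool" where
  "C2_on S f \<longleftrightarrow> (\<forall>x\<in>S. f differentiable (at x)) \<and> (\<forall>j. \<forall>x\<in>S. pd f j differentiable (at x)) \<and>
     (\<forall>j k. continuous_on S (pd (pd f j) k))"

definition locally_C2alpha_curve :: "real \<Rightarrow> (real^2) set \<Rightarrow> (real^2) set \<Rightarrow> bool" where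
  "locally_C2alpha_curve \<alpha> U \<Gamma> \<longleftrightarrow>
    (\<forall>x0\<in>\<Gamma> \<inter> U. \<exists>r>0. \<exists>\<theta>::real. \<exists>g g1 g2 :: real \<Rightarrow> real.
       (\<forall>t. (g has_real_derivative g1 t) (at t)) \<and> (\<forall>t. (g1 has_real_derivative g2 t) (at t)) \<and>
       continuous_on UNIV g2 \<and>
       (let e1 = vector [cos \<theta>, sin \<theta>] :: real^2; e2 = vector [- sin \<theta>, cos \<theta>] :: real^2 in
         (\<exists>C. \<forall>s\<in>{x0 \<bullet> e1 - r .. x0 \<bullet> e1 + r}. \<forall>t\<in>{x0 \<bullet> e1 - r .. x0 \<bullet> e1 + r}.
              \<bar>g2 s - g2 t\<bar> \<le> C * \<bar>s - t\<bar> powr \<alpha>) \<and>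
         \<Gamma> \<inter> U \<inter> ball x0 r = {x \<in> ball x0 r. x \<bullet> e2 = g (x \<bullet> e1)}))"

definition two_phase_weak_solution :: "real \<Rightarrow> real \<Rightarrow> (real^2) set \<Rightarrow> (real^2 \<Rightarrow> real) \<Rightarrow> bool" where
  "two_phase_weak_solution \<alpha> x20 \<Omega> u \<longleftrightarrow>
     W12 \<Omega> u \<and>
     continuous_on \<Omega> u \<and> C2_on (\<Omega> \<inter> {x. u x \<noteq> 0}) u \<and>
     (\<exists>g. weak_gradient \<Omega> u g \<and>
       (\<forall>\<phi>::real^2 \<Rightarrow> real^2. C1c \<Omega> \<phi> \<longrightarrow>
          0 = (LINT x:\<Omega>|lebesgue. (norm (g x))\<^sup>2 * divg \<phi> x - 2 * quadD (g x) \<phi> x)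
            + (LINT x:(\<Omega> \<inter> {x. x $ 2 < x20})|lebesgue.
                 (x20 - x $ 2) * indicator {x. u x < 0} x * divg \<phi> x - indicator {x. u x < 0} x * \<phi> x $ 2)
            + (LINT x:(\<Omega> \<inter> {x. x $ 2 > x20})|lebesgue.
                 (x $ 2 - x20) * indicator {x. u x > 0} x * divg \<phi> x + indicator {x. u x > 0} x * \<phi> x $ 2))) \<and>
     locally_C2alpha_curve \<alpha> \<Omega> (frontier {x. u x < 0})"

definition one_phase_weak_solution :: "real \<Rightarrow> real \<Rightarrow> (real^2) set \<Rightarrow> (real^2 \<Rightarrow> real) \<Rightarrow> bool" where
  "one_phase_weak_solution \<alpha> x20 U w \<longleftrightarrow>
     (\<forall>x\<in>U. w x \<le> 0) \<and> W12 U w \<and>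
     continuous_on U w \<and> C2_on (U \<inter> {x. w x < 0}) w \<and>
     (\<exists>g. weak_gradient U w g \<and>
       (\<forall>\<phi>::real^2 \<Rightarrow> real^2. C1c U \<phi> \<longrightarrow>
          0 = (LINT x:U|lebesgue. (norm (g x))\<^sup>2 * divg \<phi> x - 2 * quadD (g x) \<phi> x)
            + (LINT x:(U \<inter> {x. x $ 2 < x20})|lebesgue.
                 (x20 - x $ 2) * indicator {x. w x < 0} x * divg \<phi> x - indicator {x. w x < 0} x * \<phi> x $ 2))) \<and>
     locally_C2alpha_curve \<alpha> U (frontier {x. w x < 0})"

end

theory Submission
  imports Defs
begin

lemma pd_local:
  assumes "open S" "x \<in> S" "\<And>y. y \<in> S \<Longrightarrow> f y = g y"
  shows "pd f j x = pd g j x"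
proof -
  have "(f has_derivative D) (at x) \<longleftrightarrow> (g has_derivative D) (at x)" for D
  proof
    assume "(f has_derivative D) (at x)"
    then show "(g has_derivative D) (at x)"
      by (rule has_derivative_transform_within_open[OF _ assms(1,2)]) (simp add: assms(3))
  next
    assume "(g has_derivative D) (at x)"
    then show "(f has_derivative D) (at x)"
      by (rule has_derivative_transform_within_open[OF _ assms(1,2)]) (simp add: assms(3))
  qed
  then show ?thesis unfolding pd_def frechet_derivative_def by simp
qed

lemma diff_local:
  assumes "open S" "x \<in> S" "\<And>y. y \<in> S \<Longrightarrow> f y = g y" "g differentiable (at x)"
  shows "f differentiable (at x)"
proof -
  obtain D where "(g has_derivative D) (at x)" using assms(4) unfolding differentiable_def by blast
  then have "(f has_derivative D) (at x)"
    by (rule has_derivative_transform_within_open[OF _ assms(1,2)]) (simp add: assms(3))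
  then show ?thesis unfolding differentiable_def by blast
qed

lemma pd_zero_outside:
  fixes f :: "real^2 \<Rightarrow> 'b::real_normed_vector"
  assumes "x \<notin> closure {y. f y \<noteq> 0}"
  shows "pd f j x = 0"
proof -
  have "pd f j x = pd (\<lambda>_. 0::'b) j x"
  proof (rule pd_local[of "- closure {y. f y \<noteq> 0}"])
    show "open (- closure {y. f y \<noteq> 0})" by (intro open_Compl closed_closure)
    show "x \<in> - closure {y. f y \<noteq> 0}" using assms by blast
    show "f y = 0" if "y \<in> - closure {y. f y \<noteq> 0}" for y
      using that closure_subset[of "{y. f y \<noteq> 0}"] by blast
  qed
  moreover have "frechet_derivative (\<lambda>_. 0::'b) (at x) = (\<lambda>_. 0)"
    by (rule frechet_derivative_at[OF has_derivative_const, symmetric])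
  ultimately show ?thesis unfolding pd_def by simp
qed

lemma val_zero_outside:
  assumes "x \<notin> closure {y. f y \<noteq> 0}"
  shows "f x = 0"
  using assms closure_subset[of "{y. f y \<noteq> 0}"] by blast

lemma divg_zero_outside:
  assumes "x \<notin> closure {y. \<phi> y \<noteq> 0}"
  shows "divg \<phi> x = 0" "quadD p \<phi> x = 0"
  using pd_zero_outside[OF assms] unfolding divg_def quadD_def by auto


theorem proposition2p1:
  fixes \<Omega> :: "(real^2) set" and u :: "real^2 \<Rightarrow> real" and x20 \<alpha> :: real
  assumes "open \<Omega>" and "0 < \<alpha>" and "\<alpha> < 1"
    and "two_phase_weak_solution \<alpha> x20 \<Omega> u"
  shows "one_phase_weak_solution \<alpha> x20 (\<Omega> \<inter> {x. u x \<le> 0}) (\<lambda>x. min (u x) 0)"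
proof -
  define U where "U = \<Omega> \<inter> {x. u x \<le> 0}"
  define w where "w = (\<lambda>x. min (u x) 0)"
  from assms(4) have cont: "continuous_on \<Omega> u" and C2: "C2_on (\<Omega> \<inter> {x. u x \<noteq> 0}) u"
    and curve: "locally_C2alpha_curve \<alpha> \<Omega> (frontier {x. u x < 0})"
    unfolding two_phase_weak_solution_def by blast+
  from assms(4) obtain g where wg: "weak_gradient \<Omega> u g" and eq: "\<And>\<phi>::real^2 \<Rightarrow> real^2. C1c \<Omega> \<phi> \<Longrightarrow>
          0 = (LINT x:\<Omega>|lebesgue. (norm (g x))\<^sup>2 * divg \<phi> x - 2 * quadD (g x) \<phi> x)
            + (LINT x:(\<Omega> \<inter> {x. x $ 2 < x20})|lebesgue.
                 (x20 - x $ 2) * indicator {x. u x < 0} x * divg \<phi> x - indicator {x. u x < 0} x * \<phi> x $ 2)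
            + (LINT x:(\<Omega> \<inter> {x. x $ 2 > x20})|lebesgue.
                 (x $ 2 - x20) * indicator {x. u x > 0} x * divg \<phi> x + indicator {x. u x > 0} x * \<phi> x $ 2)"
    unfolding two_phase_weak_solution_def by blast
  have wgm: "set_borel_measurable lebesgue \<Omega> u" using wg[unfolded weak_gradient_def] by blast
  have wgi: "set_integrable lebesgue \<Omega> (\<lambda>x. (u x)\<^sup>2)" using wg[unfolded weak_gradient_def] by blast
  have wggm: "set_borel_measurable lebesgue \<Omega> (\<lambda>x. g x $ i)" for i using wg[unfolded weak_gradient_def] by blast
  have wggi: "set_integrable lebesgue \<Omega> (\<lambda>x. (g x $ i)\<^sup>2)" for i using wg[unfolded weak_gradient_def] by blast
  have wgt: "\<And>\<psi> i. C1c \<Omega> \<psi> \<Longrightarrow> (LINT x:\<Omega>|lebesgue. u x * pd \<psi> i x) = - (LINT x:\<Omega>|lebesgue. g x $ i * \<psi> x)"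
    using wg[unfolded weak_gradient_def] by blast
  have UO: "U \<subseteq> \<Omega>" unfolding U_def by auto
  have wu: "\<And>x. x \<in> U \<Longrightarrow> w x = u x" unfolding U_def w_def by auto
  have wlt: "{x. w x < 0} = {x. u x < 0}" unfolding w_def by auto
  have Omeas: "\<Omega> \<in> sets lebesgue" using borel_open[OF assms(1)] by simp
  have umeas: "(\<lambda>x. indicator \<Omega> x *\<^sub>R u x) \<in> borel_measurable lebesgue"
    using wgm unfolding set_borel_measurable_def .
  have "{x \<in> space lebesgue. indicator \<Omega> x *\<^sub>R u x \<le> 0} \<in> sets lebesgue"
    using umeas by measurable
  then have "{x \<in> space lebesgue. indicator \<Omega> x *\<^sub>R u x \<le> 0} \<inter> \<Omega> \<in> sets lebesgue"
    using Omeas by blast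
  moreover have "{x \<in> space lebesgue. indicator \<Omega> x *\<^sub>R u x \<le> 0} \<inter> \<Omega> = U"
    unfolding U_def by auto
  ultimately have Umeas: "U \<in> sets lebesgue" by simp
  have C1: "C1c \<Omega> \<phi>" if "C1c U \<phi>" for \<phi> :: "real^2 \<Rightarrow> 'b::real_normed_vector"
    using that UO unfolding C1c_def by auto
  have outs: "x \<notin> closure {y. \<phi> y \<noteq> 0}" if "C1c U \<phi>" "x \<notin> U" for \<phi> :: "real^2 \<Rightarrow> 'b::real_normed_vector" and x
    using that unfolding C1c_def by auto

  have wgU: "weak_gradient U w g"
    unfolding weak_gradient_def
  proof (intro conjI allI impI)
    have "(\<lambda>x. indicator U x * (indicator \<Omega> x *\<^sub>R u x)) \<in> borel_measurable lebesgue"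
      by (intro borel_measurable_times borel_measurable_indicator Umeas umeas)
    moreover have "(\<lambda>x. indicator U x * (indicator \<Omega> x *\<^sub>R u x)) = (\<lambda>x. indicator U x *\<^sub>R w x)"
      by (rule ext) (use wu UO in \<open>auto simp: indicator_def\<close>)
    ultimately show "set_borel_measurable lebesgue U w" unfolding set_borel_measurable_def by simp
  next
    have "set_integrable lebesgue U (\<lambda>x. (u x)\<^sup>2)"
      using set_integrable_subset[OF wgi Umeas UO] .
    then show "set_integrable lebesgue U (\<lambda>x. (w x)\<^sup>2)"
      using set_integrable_cong[of lebesgue lebesgue U U "\<lambda>x. (w x)\<^sup>2" "\<lambda>x. (u x)\<^sup>2"] wu by simp
  next
    fix i
    have gm: "(\<lambda>x. indicator \<Omega> x *\<^sub>R (g x $ i)) \<in> borel_measurable lebesgue"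
      using wggm[of i] unfolding set_borel_measurable_def .
    have "(\<lambda>x. indicator U x * (indicator \<Omega> x *\<^sub>R (g x $ i))) \<in> borel_measurable lebesgue"
      by (intro borel_measurable_times borel_measurable_indicator Umeas gm)
    moreover have "(\<lambda>x. indicator U x * (indicator \<Omega> x *\<^sub>R (g x $ i))) = (\<lambda>x. indicator U x *\<^sub>R (g x $ i))"
      by (rule ext) (use UO in \<open>auto simp: indicator_def\<close>)
    ultimately show "set_borel_measurable lebesgue U (\<lambda>x. g x $ i)" unfolding set_borel_measurable_def by simp
  next
    fix i
    show "set_integrable lebesgue U (\<lambda>x. (g x $ i)\<^sup>2)"
      using set_integrable_subset[OF wggi Umeas UO] .
  next
    fix \<psi> :: "real^2 \<Rightarrow> real" and i
    assume psi: "C1c U \<psi>"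
    have "(LINT x:U|lebesgue. w x * pd \<psi> i x) = (LINT x:\<Omega>|lebesgue. u x * pd \<psi> i x)"
      unfolding set_lebesgue_integral_def
    proof (rule Bochner_Integration.integral_cong[OF refl])
      fix x
      show "indicator U x *\<^sub>R (w x * pd \<psi> i x) = indicator \<Omega> x *\<^sub>R (u x * pd \<psi> i x)"
        using wu UO pd_zero_outside[OF outs[OF psi, of x]] by (cases "x \<in> U"; cases "x \<in> \<Omega>") auto
    qed
    also have "\<dots> = - (LINT x:\<Omega>|lebesgue. g x $ i * \<psi> x)"
      using wgt C1[OF psi] by blast
    also have "(LINT x:\<Omega>|lebesgue. g x $ i * \<psi> x) = (LINT x:U|lebesgue. g x $ i * \<psi> x)"
      unfolding set_lebesgue_integral_def
    proof (rule Bochner_Integration.integral_cong[OF refl])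
      fix x
      show "indicator \<Omega> x *\<^sub>R (g x $ i * \<psi> x) = indicator U x *\<^sub>R (g x $ i * \<psi> x)"
        using UO val_zero_outside[OF outs[OF psi, of x]] by (cases "x \<in> U"; cases "x \<in> \<Omega>") auto
    qed
    finally show "(LINT x:U|lebesgue. w x * pd \<psi> i x) = - (LINT x:U|lebesgue. g x $ i * \<psi> x)" .
  qed

  have weq: "0 = (LINT x:U|lebesgue. (norm (g x))\<^sup>2 * divg \<phi> x - 2 * quadD (g x) \<phi> x)
            + (LINT x:(U \<inter> {x. x $ 2 < x20})|lebesgue.
                 (x20 - x $ 2) * indicator {x. w x < 0} x * divg \<phi> x - indicator {x. w x < 0} x * \<phi> x $ 2)"
    if phi: "C1c U \<phi>" for \<phi> :: "real^2 \<Rightarrow> real^2"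
  proof -
    have z: "divg \<phi> x = 0" "quadD p \<phi> x = 0" "\<phi> x = 0" if "x \<notin> U" for x p
      using divg_zero_outside[OF outs[OF phi that]] val_zero_outside[OF outs[OF phi that]] by auto
    have A: "(LINT x:\<Omega>|lebesgue. (norm (g x))\<^sup>2 * divg \<phi> x - 2 * quadD (g x) \<phi> x)
        = (LINT x:U|lebesgue. (norm (g x))\<^sup>2 * divg \<phi> x - 2 * quadD (g x) \<phi> x)"
      unfolding set_lebesgue_integral_def
      by (rule Bochner_Integration.integral_cong[OF refl])
         (use UO z in \<open>auto simp: indicator_def\<close>)
    have B: "(LINT x:(\<Omega> \<inter> {x. x $ 2 < x20})|lebesgue.
                 (x20 - x $ 2) * indicator {x. u x < 0} x * divg \<phi> x - indicator {x. u x < 0} x * \<phi> x $ 2)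
        = (LINT x:(U \<inter> {x. x $ 2 < x20})|lebesgue.
                 (x20 - x $ 2) * indicator {x. w x < 0} x * divg \<phi> x - indicator {x. w x < 0} x * \<phi> x $ 2)"
      unfolding set_lebesgue_integral_def wlt
      by (rule Bochner_Integration.integral_cong[OF refl])
         (use UO z in \<open>auto simp: indicator_def\<close>)
    have C: "(LINT x:(\<Omega> \<inter> {x. x $ 2 > x20})|lebesgue.
                 (x $ 2 - x20) * indicator {x. u x > 0} x * divg \<phi> x + indicator {x. u x > 0} x * \<phi> x $ 2) = 0"
    proof -
      have "(\<lambda>x. indicator (\<Omega> \<inter> {x. x $ 2 > x20}) x *\<^sub>R ((x $ 2 - x20) * indicator {x. u x > 0} x * divg \<phi> x + indicator {x. u x > 0} x * \<phi> x $ 2)) = (\<lambda>x. 0::real)"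
        by (rule ext) (use z in \<open>auto simp: indicator_def U_def\<close>)
      then show ?thesis unfolding set_lebesgue_integral_def by simp
    qed
    show ?thesis using eq[OF C1[OF phi]] A B C by simp
  qed

  have S'eq: "U \<inter> {x. w x < 0} = \<Omega> \<inter> u -` {..<0}" unfolding U_def w_def by auto
  have S'open: "open (U \<inter> {x. w x < 0})"
    unfolding S'eq by (rule continuous_open_preimage[OF cont assms(1)]) auto
  have S'sub: "U \<inter> {x. w x < 0} \<subseteq> \<Omega> \<inter> {x. u x \<noteq> 0}" unfolding U_def w_def by auto
  have wuS: "\<And>y. y \<in> U \<inter> {x. w x < 0} \<Longrightarrow> w y = u y" using wu by auto
  have pdS: "pd w j y = pd u j y" if "y \<in> U \<inter> {x. w x < 0}" for j y
    by (rule pd_local[OF S'open that]) (rule wuS)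
  have C2w: "C2_on (U \<inter> {x. w x < 0}) w"
    unfolding C2_on_def
  proof (intro conjI allI ballI)
    fix x assume x: "x \<in> U \<inter> {x. w x < 0}"
    show "w differentiable (at x)"
    proof (rule diff_local[OF S'open x])
      show "w y = u y" if "y \<in> U \<inter> {x. w x < 0}" for y using wuS that .
      show "u differentiable (at x)" using C2 S'sub x unfolding C2_on_def by blast
    qed
  next
    fix j x assume x: "x \<in> U \<inter> {x. w x < 0}"
    show "pd w j differentiable (at x)"
    proof (rule diff_local[OF S'open x])
      show "pd w j y = pd u j y" if "y \<in> U \<inter> {x. w x < 0}" for y using pdS that .
      show "pd u j differentiable (at x)" using C2 S'sub x unfolding C2_on_def by blast
    qed
  next
    fix j k
    have "continuous_on (U \<inter> {x. w x < 0}) (pd (pd u j) k)"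
      using C2 S'sub continuous_on_subset unfolding C2_on_def by blast
    moreover have "pd (pd w j) k y = pd (pd u j) k y" if "y \<in> U \<inter> {x. w x < 0}" for y
      by (rule pd_local[OF S'open that]) (rule pdS)
    ultimately show "continuous_on (U \<inter> {x. w x < 0}) (pd (pd w j) k)"
      using continuous_on_cong by (metis (no_types, lifting))
  qed

  have frU: "frontier {x. w x < 0} \<inter> U = frontier {x. u x < 0} \<inter> \<Omega>"
  proof -
    have "u x \<le> 0" if x: "x \<in> \<Omega>" "x \<in> frontier {x. u x < 0}" for x
    proof -
      have ic: "isCont u x" using cont assms(1) x(1) continuous_on_eq_continuous_at by blast
      have "x \<in> closure {x. u x < 0}" using x(2) frontier_def by auto
      then obtain s where s: "\<And>n. s n \<in> {x. u x < 0}" "s \<longlonglongrightarrow> x"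
        unfolding closure_sequential by blast
      have "(\<lambda>n. u (s n)) \<longlonglongrightarrow> u x" by (rule isCont_tendsto_compose[OF ic s(2)])
      moreover have "\<exists>N. \<forall>n\<ge>N. u (s n) \<le> 0" using s(1) less_imp_le by auto
      ultimately show ?thesis by (rule LIMSEQ_le_const2)
    qed
    then show ?thesis unfolding wlt U_def by auto
  qed
  have curveU: "locally_C2alpha_curve \<alpha> U (frontier {x. w x < 0})"
    using curve unfolding locally_C2alpha_curve_def frU by (simp only:)

  have "one_phase_weak_solution \<alpha> x20 U w"
    unfolding one_phase_weak_solution_def
  proof (intro conjI)
    show "\<forall>x\<in>U. w x \<le> 0" unfolding w_def by auto
    show "W12 U w" unfolding W12_def using wgU by blast
    show "continuous_on U w" unfolding w_def
      by (intro continuous_intros continuous_on_subset[OF cont UO])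
    show "C2_on (U \<inter> {x. w x < 0}) w" by (rule C2w)
    show "locally_C2alpha_curve \<alpha> U (frontier {x. w x < 0})" by (rule curveU)
    show "\<exists>g. weak_gradient U w g \<and> (\<forall>\<phi>::real^2 \<Rightarrow> real^2. C1c U \<phi> \<longrightarrow>
          0 = (LINT x:U|lebesgue. (norm (g x))\<^sup>2 * divg \<phi> x - 2 * quadD (g x) \<phi> x)
            + (LINT x:(U \<inter> {x. x $ 2 < x20})|lebesgue.
                 (x20 - x $ 2) * indicator {x. w x < 0} x * divg \<phi> x - indicator {x. w x < 0} x * \<phi> x $ 2))"
      using wgU weq by blast
  qed
  then show ?thesis unfolding U_def w_def .
qed

end
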